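(* Let $n\geq2$ be an integer, $b:=-n+i$, $D=\{0,m\}$ with $2\le m\le n^2$. Let $\alpha\in E_{n,D}$ and suppose there is exactly one sequence $(\alpha_j)_{j\ge1}$ with $\alpha_j\in\{0,\pm m\}$ and $\alpha=\sum_{j\ge1}\alpha_jb^{-j}$. Let $\gamma:=\sum_{j\ge1}\gamma_jb^{-j}$ where $\gamma_j:=\min(D\cap(D+\alpha_j))$. Then, with $C(\alpha):=C_{n,D}\cap(C_{n,D}+\alpha)$, $$C(\alpha)-\gamma=\Big\{\sum_{j\ge1}z_jb^{-j}: z_j\in D,\ z_j\le m-|\alpha_j|\text{ for all }j\Big\},$$ and $C(\alpha)-\gamma$ is a subset of $C_{n,D}$.
   Context: $C_{n,D}$ is the attractor of $\{z\mapsto b^{-1}(z+d): d\in D\}$, i.e. $C_{n,D}=\{\sum_{j\ge1}d_jb^{-j}: d_j\in D\}$. $E_{n,D}$ is the attractor of $\{z\mapsto b^{-1}(z+\delta):\delta\in D-D\}$, i.e. $E_{n,D}=\{\sum_{j\ge1}\delta_jb^{-j}:\delta_j\in D-D\}$. $X-\gamma=\{x-\gamma:x\in X\}$. *)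

theory Defs
  imports "HOL-Analysis.Analysis"
begin

definition bbase :: "nat \<Rightarrow> complex" where
  "bbase n = - of_nat n + \<i>"

text \<open>Radix expansion: the digit sequence d is indexed from 0, d j standing for the
  paper's d_(j+1); value = sum over j>=1 of d_j b^(-j).\<close>
definition radix_val :: "complex \<Rightarrow> (nat \<Rightarrow> int) \<Rightarrow> complex" where
  "radix_val b d = (\<Sum>j. of_int (d j) / b ^ Suc j)"

definition Cset :: "complex \<Rightarrow> int set \<Rightarrow> complex set" where
  "Cset b D = {radix_val b d | d. \<forall>j. d j \<in> D}"

definition Eset :: "complex \<Rightarrow> int set \<Rightarrow> complex set" where
  "Eset b D = {radix_val b d | d. \<forall>j. d j \<in> {x - y | x y. x \<in> D \<and> y \<in> D}}"

end

theory Submission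
  imports Defs
begin

lemma bbase_norm: "n \<ge> 1 \<Longrightarrow> 1 < norm (bbase n)"
proof -
  assume n: "n \<ge> 1"
  have "norm (bbase n) = sqrt (real n ^ 2 + 1)"
    by (simp add: bbase_def cmod_def)
  moreover have "1 < sqrt (real n ^ 2 + 1)"
    using n by (simp add: real_less_rsqrt)
  ultimately show ?thesis by simp
qed

lemma radix_summable:
  fixes b :: complex
  assumes b: "1 < norm b" and K: "\<forall>j. \<bar>d j\<bar> \<le> K"
  shows "summable (\<lambda>j. of_int (d j) / b ^ Suc j)"
proof (rule summable_comparison_test)
  have "summable (\<lambda>j. (of_int K / norm b) * (inverse (norm b)) ^ j)"
    using b by (intro summable_mult summable_geometric) (simp add: inverse_less_1_iff)
  then show "summable (\<lambda>j. (of_int K / norm b) * (inverse (norm b)) ^ j)" .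
  show "\<exists>N. \<forall>j\<ge>N. norm (of_int (d j) / b ^ Suc j) \<le> (of_int K / norm b) * (inverse (norm b)) ^ j"
  proof (intro exI allI impI)
    fix j :: nat
    have pos: "0 < norm b ^ Suc j" using b by (metis less_trans zero_less_one zero_less_power)
    have "norm (of_int (d j) / b ^ Suc j) = real_of_int \<bar>d j\<bar> / norm b ^ Suc j"
      by (simp add: norm_divide norm_power norm_mult)
    also have "\<dots> \<le> real_of_int K / norm b ^ Suc j"
    proof -
      have "\<bar>d j\<bar> \<le> K" using K by blast
      then have "real_of_int \<bar>d j\<bar> \<le> real_of_int K" by linarith
      then show ?thesis using pos by (intro divide_right_mono) auto
    qed
    also have "\<dots> = (of_int K / norm b) * (inverse (norm b)) ^ j"
      by (simp add: field_simps power_inverse)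
    finally show "norm (of_int (d j) / b ^ Suc j) \<le> (of_int K / norm b) * (inverse (norm b)) ^ j" .
  qed
qed

lemma radix_add:
  fixes b :: complex
  assumes b: "1 < norm b" and "\<forall>j. \<bar>d j\<bar> \<le> K" "\<forall>j. \<bar>e j\<bar> \<le> L"
  shows "radix_val b (\<lambda>j. d j + e j) = radix_val b d + radix_val b e"
proof -
  have s1: "summable (\<lambda>j. of_int (d j) / b ^ Suc j)" using radix_summable assms by blast
  have s2: "summable (\<lambda>j. of_int (e j) / b ^ Suc j)" using radix_summable assms by blast
  show ?thesis unfolding radix_val_def
    using suminf_add[OF s1 s2] by (simp add: add_divide_distrib)
qed

lemma radix_diff:
  fixes b :: complex
  assumes b: "1 < norm b" and "\<forall>j. \<bar>d j\<bar> \<le> K" "\<forall>j. \<bar>e j\<bar> \<le> L"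
  shows "radix_val b (\<lambda>j. d j - e j) = radix_val b d - radix_val b e"
proof -
  have s1: "summable (\<lambda>j. of_int (d j) / b ^ Suc j)" using radix_summable assms by blast
  have s2: "summable (\<lambda>j. of_int (e j) / b ^ Suc j)" using radix_summable assms by blast
  show ?thesis unfolding radix_val_def
    using suminf_diff[OF s1 s2] by (simp add: diff_divide_distrib)
qed

lemma Min_digit:
  assumes "m \<ge> (1::int)" "x \<in> {0, m, -m}"
  shows "Min ({0, m} \<inter> (\<lambda>y. y + x) ` {0, m}) = max x 0"
  using assms by (auto simp: insert_commute)

theorem lemma5p6:
  fixes n m :: nat and \<alpha> :: complex and a :: "nat \<Rightarrow> int"
  assumes "n \<ge> 2" and "2 \<le> m" and "m \<le> n ^ 2"
    and "\<alpha> \<in> Eset (bbase n) {0, int m}"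
    and "\<forall>j. a j \<in> {0, int m, - int m}" and "\<alpha> = radix_val (bbase n) a"
    and "\<forall>a'. (\<forall>j. a' j \<in> {0, int m, - int m}) \<and> \<alpha> = radix_val (bbase n) a' \<longrightarrow> a' = a"
  shows "(\<lambda>z. z - radix_val (bbase n) (\<lambda>j. Min ({0, int m} \<inter> (\<lambda>x. x + a j) ` {0, int m})))
            ` (Cset (bbase n) {0, int m} \<inter> (\<lambda>z. z + \<alpha>) ` Cset (bbase n) {0, int m})
         = {radix_val (bbase n) z | z. \<forall>j. z j \<in> {0, int m} \<and> z j \<le> int m - \<bar>a j\<bar>}
       \<and> (\<lambda>z. z - radix_val (bbase n) (\<lambda>j. Min ({0, int m} \<inter> (\<lambda>x. x + a j) ` {0, int m})))
            ` (Cset (bbase n) {0, int m} \<inter> (\<lambda>z. z + \<alpha>) ` Cset (bbase n) {0, int m})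
         \<subseteq> Cset (bbase n) {0, int m}"
proof -
  define B where "B = bbase n"
  define M where "M = int m"
  have M1: "M \<ge> 1" using assms(2) by (simp add: M_def)
  have b: "1 < norm B" unfolding B_def using assms(1) by (intro bbase_norm) simp
  have a: "\<forall>j. a j \<in> {0, M, - M}" using assms(5) by (simp add: M_def)
  have uniq: "\<And>a'. \<forall>j. a' j \<in> {0, M, - M} \<Longrightarrow> \<alpha> = radix_val B a' \<Longrightarrow> a' = a"
    using assms(7) by (simp add: M_def B_def)
  have alpha: "\<alpha> = radix_val B a" using assms(6) by (simp add: B_def)
  have g: "(\<lambda>j. Min ({0, M} \<inter> (\<lambda>x. x + a j) ` {0, M})) = (\<lambda>j. max (a j) 0)"
  proof
    fix j have "a j \<in> {0, M, - M}" using a by blast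
    then show "Min ({0, M} \<inter> (\<lambda>x. x + a j) ` {0, M}) = max (a j) 0" by (rule Min_digit[OF M1])
  qed
  have abnd: "\<forall>j. \<bar>a j\<bar> \<le> M"
  proof
    fix j have "a j \<in> {0, M, - M}" using a by blast
    then show "\<bar>a j\<bar> \<le> M" using M1 by auto
  qed
  have gbnd: "\<forall>j. \<bar>max (a j) 0\<bar> \<le> M"
  proof
    fix j have "a j \<in> {0, M, - M}" using a by blast
    then show "\<bar>max (a j) 0\<bar> \<le> M" using M1 by auto
  qed
  define S where "S = (\<lambda>z. z - radix_val B (\<lambda>j. max (a j) 0))
            ` (Cset B {0, M} \<inter> (\<lambda>z. z + \<alpha>) ` Cset B {0, M})"
  define T where "T = {radix_val B z | z. \<forall>j. z j \<in> {0, M} \<and> z j \<le> M - \<bar>a j\<bar>}"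
  have DB: "\<forall>j. \<bar>d j\<bar> \<le> M" if dd: "\<forall>j. d j \<in> {0, M}" for d
  proof
    fix j from dd have "d j \<in> {0, M}" by blast
    then show "\<bar>d j\<bar> \<le> M" using M1 by auto
  qed
  have "S \<subseteq> T"
  proof
    fix x assume "x \<in> S"
    then obtain w where w1: "w \<in> Cset B {0, M}" and w2: "w \<in> (\<lambda>z. z + \<alpha>) ` Cset B {0, M}"
      and x: "x = w - radix_val B (\<lambda>j. max (a j) 0)"
      unfolding S_def by blast
    from w2 obtain y where y: "y \<in> Cset B {0, M}" and wy: "w = y + \<alpha>" by blast
    from w1 obtain c where c: "\<forall>j. c j \<in> {0, M}" and wc: "w = radix_val B c"
      unfolding Cset_def by blast
    from y obtain c' where c': "\<forall>j. c' j \<in> {0, M}" and yc: "y = radix_val B c'"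
      unfolding Cset_def by blast
    have eq: "radix_val B c = radix_val B c' + \<alpha>" using wc wy yc by simp
    have x: "x = radix_val B c - radix_val B (\<lambda>j. max (a j) 0)" using x wc by simp
    have ha: "\<alpha> = radix_val B (\<lambda>j. c j - c' j)"
      using eq radix_diff[OF b DB[OF c] DB[OF c']] by simp
    moreover have hd: "\<forall>j. c j - c' j \<in> {0, M, - M}"
    proof
      fix j have "c j \<in> {0, M}" "c' j \<in> {0, M}" using c c' by blast+
      then show "c j - c' j \<in> {0, M, - M}" by auto
    qed
    have ca: "(\<lambda>j. c j - c' j) = a" by (rule uniq[OF hd ha])
    have "x = radix_val B (\<lambda>j. c j - max (a j) 0)"
      using x radix_diff[OF b DB[OF c] gbnd] by simp
    moreover have "\<forall>j. c j - max (a j) 0 \<in> {0, M} \<and> c j - max (a j) 0 \<le> M - \<bar>a j\<bar>"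
    proof
      fix j
      have "c j - c' j = a j" using ca by metis
      moreover have "c j \<in> {0, M}" "c' j \<in> {0, M}" using c c' by blast+
      ultimately show "c j - max (a j) 0 \<in> {0, M} \<and> c j - max (a j) 0 \<le> M - \<bar>a j\<bar>"
        using M1 by auto
    qed
    ultimately show "x \<in> T" unfolding T_def by blast
  qed
  moreover have "T \<subseteq> S"
  proof
    fix x assume "x \<in> T"
    then obtain z where z: "\<forall>j. z j \<in> {0, M} \<and> z j \<le> M - \<bar>a j\<bar>" and x: "x = radix_val B z"
      unfolding T_def by auto
    define c where "c = (\<lambda>j. z j + max (a j) 0)"
    define c' where "c' = (\<lambda>j. c j - a j)"
    have c: "\<forall>j. c j \<in> {0, M}"
    proof
      fix j have "z j \<in> {0, M}" "z j \<le> M - \<bar>a j\<bar>" "a j \<in> {0, M, -M}" using z a by blast+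
      then show "c j \<in> {0, M}" using M1 unfolding c_def by auto
    qed
    have c': "\<forall>j. c' j \<in> {0, M}"
    proof
      fix j have "z j \<in> {0, M}" "z j \<le> M - \<bar>a j\<bar>" "a j \<in> {0, M, -M}" using z a by blast+
      then show "c' j \<in> {0, M}" using M1 unfolding c'_def c_def by auto
    qed
    have zb: "\<forall>j. \<bar>z j\<bar> \<le> M" using z by (intro DB) blast
    have "radix_val B c = x + radix_val B (\<lambda>j. max (a j) 0)"
      unfolding c_def x using radix_add[OF b zb gbnd] by simp
    moreover have "radix_val B c = radix_val B c' + \<alpha>"
    proof -
      have "c = (\<lambda>j. c' j + a j)" unfolding c'_def by simp
      then show ?thesis using radix_add[OF b DB[OF c'] abnd] alpha by simp
    qed
    moreover have "radix_val B c \<in> Cset B {0, M}" using c unfolding Cset_def by blast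
    moreover have "radix_val B c' \<in> Cset B {0, M}" using c' unfolding Cset_def by blast
    ultimately have "radix_val B c \<in> Cset B {0, M} \<inter> (\<lambda>z. z + \<alpha>) ` Cset B {0, M}"
      by (auto intro: image_eqI[where x = "radix_val B c'"])
    moreover have "x = radix_val B c - radix_val B (\<lambda>j. max (a j) 0)"
      using \<open>radix_val B c = x + radix_val B (\<lambda>j. max (a j) 0)\<close> by simp
    ultimately show "x \<in> S" unfolding S_def by (rule rev_image_eqI)
  qed
  ultimately have ST: "S = T" by blast
  have "T \<subseteq> Cset B {0, M}" unfolding T_def Cset_def by blast
  then have "S = T \<and> S \<subseteq> Cset B {0, M}" using ST by simp
  then show ?thesis unfolding S_def T_def g[symmetric] M_def B_def .
qed

end
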